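(* Let $(\Omega,\mathcal{F},\mathbb{P})$ be a probability space and let $\mathcal{A}\subset L^0_+$ be convex and solid. Then $\mathcal{A}$ is tight if and only if $\mathcal{A}$ is radially bounded.
   Context: $L^0$ denotes the space of real-valued measurable functions on $\Omega$ modulo $\mathbb{P}$-a.s. equality, ordered by $X\ge Y$ iff $\mathbb{P}(X\ge Y)=1$; $L^0_+=\{X\in L^0: X\ge 0\}$. A set $\mathcal{A}\subset L^0$ is solid if $X\in\mathcal{A}$ and $|Y|\le|X|$ imply $Y\in\mathcal{A}$. A set $\mathcal{A}$ is radially bounded if for every $X\in\mathcal{A}\setminus\{0\}$ there exists $\lambda_X\in(0,\infty)$ such that $\lambda X\notin\mathcal{A}$ for all $\lambda\in(\lambda_X,\infty)$. A set $\mathcal{A}$ is tight (bounded in probability) if for every $\varepsilon>0$ there exists $M>0$ with $\sup_{X\in\mathcal{A}}\mathbb{P}(|X|>M)<\varepsilon$. *)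

theory Defs
  imports "HOL-Probability.Probability"
begin

text \<open>Elements of L^0 are represented by real-valued measurable functions; all
  order relations are understood almost surely.  Sets of random variables
  considered below are closed under a.s. equality by solidity.\<close>

definition L0_pos :: "'a measure \<Rightarrow> ('a \<Rightarrow> real) set" where
  "L0_pos M = {X \<in> borel_measurable M. AE \<omega> in M. 0 \<le> X \<omega>}"

definition convex_L0 :: "('a \<Rightarrow> real) set \<Rightarrow> bool" where
  "convex_L0 A \<longleftrightarrow> (\<forall>X\<in>A. \<forall>Y\<in>A. \<forall>t::real. 0 \<le> t \<and> t \<le> 1 \<longrightarrow>
       (\<lambda>\<omega>. t * X \<omega> + (1 - t) * Y \<omega>) \<in> A)"

definition solid_pos :: "'a measure \<Rightarrow> ('a \<Rightarrow> real) set \<Rightarrow> bool" where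
  "solid_pos M A \<longleftrightarrow> (\<forall>X\<in>A. \<forall>Y\<in>L0_pos M.
       (AE \<omega> in M. \<bar>Y \<omega>\<bar> \<le> \<bar>X \<omega>\<bar>) \<longrightarrow> Y \<in> A)"

definition radially_bounded :: "'a measure \<Rightarrow> ('a \<Rightarrow> real) set \<Rightarrow> bool" where
  "radially_bounded M A \<longleftrightarrow> (\<forall>X\<in>A. \<not> (AE \<omega> in M. X \<omega> = 0) \<longrightarrow>
       (\<exists>l::real. 0 < l \<and> (\<forall>c::real. l < c \<longrightarrow> (\<lambda>\<omega>. c * X \<omega>) \<notin> A)))"

definition tight_L0 :: "'a measure \<Rightarrow> ('a \<Rightarrow> real) set \<Rightarrow> bool" where
  "tight_L0 M A \<longleftrightarrow> (\<forall>\<epsilon>::real. 0 < \<epsilon> \<longrightarrow> (\<exists>C::real. 0 < C \<and>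
       (\<forall>X\<in>A. measure M {\<omega> \<in> space M. \<bar>X \<omega>\<bar> > C} < \<epsilon>)))"

end

theory Submission
  imports Defs
begin

lemma tight_radial:
  fixes M :: "'a measure" and A :: "('a \<Rightarrow> real) set"
  assumes P: "prob_space M"
    and AL: "A \<subseteq> L0_pos M"
    and T: "tight_L0 M A"
  shows "radially_bounded M A"
  unfolding radially_bounded_def
proof (intro ballI impI)
  interpret prob_space M by fact
  fix X assume XA: "X \<in> A" and nz: "\<not> (AE \<omega> in M. X \<omega> = 0)"
  have Xm: "X \<in> borel_measurable M" and Xpos: "AE \<omega> in M. 0 \<le> X \<omega>"
    using XA AL unfolding L0_pos_def by auto
  have "\<exists>n::nat. measure M {\<omega> \<in> space M. 1 / real (Suc n) < \<bar>X \<omega>\<bar>} > 0"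
  proof (rule ccontr)
    assume "\<not> ?thesis"
    then have z: "\<And>n::nat. measure M {\<omega> \<in> space M. 1 / real (Suc n) < \<bar>X \<omega>\<bar>} = 0"
      by (metis linorder_neqE_linordered_idom measure_nonneg not_less)
    have "\<And>n::nat. AE \<omega> in M. \<bar>X \<omega>\<bar> \<le> 1 / real (Suc n)"
    proof -
      fix n :: nat
      have s: "{\<omega> \<in> space M. 1 / real (Suc n) < \<bar>X \<omega>\<bar>} \<in> sets M" using Xm by measurable
      show "AE \<omega> in M. \<bar>X \<omega>\<bar> \<le> 1 / real (Suc n)"
        using z[of n] by (subst AE_iff_measurable[OF s]) (auto simp: emeasure_eq_measure)
    qed
    then have "AE \<omega> in M. \<forall>n::nat. \<bar>X \<omega>\<bar> \<le> 1 / real (Suc n)"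
      by (simp add: AE_all_countable)
    then have "AE \<omega> in M. X \<omega> = 0"
    proof (rule AE_mp, intro AE_I2 impI)
      fix \<omega> assume h: "\<forall>n::nat. \<bar>X \<omega>\<bar> \<le> 1 / real (Suc n)"
      show "X \<omega> = 0"
      proof (rule ccontr)
        assume "X \<omega> \<noteq> 0"
        then have "\<bar>X \<omega>\<bar> > 0" by simp
        then obtain n where "inverse (real (Suc n)) < \<bar>X \<omega>\<bar>"
          using reals_Archimedean by blast
        with h show False by (metis inverse_eq_divide not_less)
      qed
    qed
    with nz show False by simp
  qed
  then obtain n :: nat where eta: "measure M {\<omega> \<in> space M. 1 / real (Suc n) < \<bar>X \<omega>\<bar>} > 0"
    by blast
  define \<eta> where "\<eta> = measure M {\<omega> \<in> space M. 1 / real (Suc n) < \<bar>X \<omega>\<bar>}"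
  obtain C where C: "0 < C" "\<forall>Y\<in>A. measure M {\<omega> \<in> space M. \<bar>Y \<omega>\<bar> > C} < \<eta>"
    using T eta unfolding tight_L0_def \<eta>_def by blast
  show "\<exists>l::real. 0 < l \<and> (\<forall>c::real. l < c \<longrightarrow> (\<lambda>\<omega>. c * X \<omega>) \<notin> A)"
  proof (intro exI conjI allI impI)
    show "0 < C * real (Suc n)" using C by simp
    fix c assume cl: "C * real (Suc n) < c"
    show "(\<lambda>\<omega>. c * X \<omega>) \<notin> A"
    proof
      assume "(\<lambda>\<omega>. c * X \<omega>) \<in> A"
      with C have lt: "measure M {\<omega> \<in> space M. \<bar>c * X \<omega>\<bar> > C} < \<eta>" by auto
      have cpos: "c > 0" using cl C by (smt (verit) of_nat_0_le_iff mult_nonneg_nonneg)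
      have sub: "{\<omega> \<in> space M. 1 / real (Suc n) < \<bar>X \<omega>\<bar>} \<subseteq> {\<omega> \<in> space M. \<bar>c * X \<omega>\<bar> > C}"
      proof safe
        fix \<omega> assume "\<omega> \<in> space M" "1 / real (Suc n) < \<bar>X \<omega>\<bar>"
        then have "1 < real (Suc n) * \<bar>X \<omega>\<bar>" by (simp add: field_simps)
        then have "C < C * (real (Suc n) * \<bar>X \<omega>\<bar>)" using C by simp
        also have "\<dots> = (C * real (Suc n)) * \<bar>X \<omega>\<bar>" by simp
        also have "\<dots> \<le> c * \<bar>X \<omega>\<bar>" using cl by (intro mult_right_mono) auto
        finally show "C < \<bar>c * X \<omega>\<bar>" using cpos by (simp add: abs_mult)
      qed
      have "{\<omega> \<in> space M. \<bar>c * X \<omega>\<bar> > C} \<in> sets M" using Xm by measurable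
      from finite_measure_mono[OF sub this] lt show False unfolding \<eta>_def by simp
    qed
  qed
qed


lemma radial_tight:
  fixes M :: "'a measure" and A :: "('a \<Rightarrow> real) set"
  assumes P: "prob_space M"
    and AL: "A \<subseteq> L0_pos M"
    and CV: "convex_L0 A"
    and SO: "solid_pos M A"
    and R: "radially_bounded M A"
  shows "tight_L0 M A"
proof (rule ccontr)
  interpret prob_space M by fact
  assume "\<not> tight_L0 M A"
  then obtain \<epsilon> :: real where ep: "0 < \<epsilon>"
    and nt: "\<And>C. 0 < C \<Longrightarrow> \<exists>X\<in>A. \<epsilon> \<le> measure M {\<omega> \<in> space M. \<bar>X \<omega>\<bar> > C}"
    unfolding tight_L0_def by (metis not_less)
  have "\<forall>k::nat. \<exists>X\<in>A. \<epsilon> \<le> measure M {\<omega> \<in> space M. \<bar>X \<omega>\<bar> > 2 ^ (k+1)}"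
    using nt by simp
  then obtain Xs where Xs: "\<And>k. Xs k \<in> A"
    and XsB: "\<And>k. \<epsilon> \<le> measure M {\<omega> \<in> space M. \<bar>Xs k \<omega>\<bar> > 2 ^ (k+1)}"
    by metis
  have Xsm: "\<And>k. Xs k \<in> borel_measurable M" using Xs AL unfolding L0_pos_def by auto
  define B where "B k = {\<omega> \<in> space M. \<bar>Xs k \<omega>\<bar> > 2 ^ (k+1)}" for k
  have Bs: "B k \<in> sets M" for k unfolding B_def using Xsm[of k] by measurable
  have Bsp: "B k \<subseteq> space M" for k unfolding B_def by auto
  have solid: "Y \<in> A" if "X \<in> A" "Y \<in> borel_measurable M" "\<And>\<omega>. \<omega> \<in> space M \<Longrightarrow> 0 \<le> Y \<omega>"
    "\<And>\<omega>. \<omega> \<in> space M \<Longrightarrow> Y \<omega> \<le> \<bar>X \<omega>\<bar>" for X Y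
  proof -
    have "Y \<in> L0_pos M" using that unfolding L0_pos_def by (auto intro: AE_I2)
    moreover have "AE \<omega> in M. \<bar>Y \<omega>\<bar> \<le> \<bar>X \<omega>\<bar>" using that by (intro AE_I2) auto
    ultimately show ?thesis using SO that(1) unfolding solid_pos_def by blast
  qed
  define E where "E j n = (\<Union>k\<in>{j..<j+n}. B k)" for j n
  have Es: "E j n \<in> sets M" for j n unfolding E_def using Bs by auto
  have key: "(\<lambda>\<omega>. 2 ^ j * indicator (E j n) \<omega>) \<in> A" for n j
  proof (induction n arbitrary: j)
    case 0
    show ?case by (rule solid[OF Xs[of 0]]) (auto simp: E_def)
  next
    case (Suc n)
    define f where "f = (\<lambda>\<omega>. (2::real) ^ (j+1) * indicator (B j) \<omega>)"
    define g where "g = (\<lambda>\<omega>. (2::real) ^ (Suc j) * indicator (E (Suc j) n) \<omega>)"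
    have fA: "f \<in> A"
    proof (rule solid[OF Xs[of j]])
      show "f \<in> borel_measurable M" unfolding f_def using Bs[of j] by measurable
    qed (auto simp: f_def B_def indicator_def)
    have gA: "g \<in> A" using Suc[of "Suc j"] by (simp add: g_def)
    have hA: "(\<lambda>\<omega>. (1/2) * f \<omega> + (1 - 1/2) * g \<omega>) \<in> A"
    proof -
      from CV fA gA have "\<forall>t::real. 0 \<le> t \<and> t \<le> 1 \<longrightarrow> (\<lambda>\<omega>. t * f \<omega> + (1 - t) * g \<omega>) \<in> A"
        unfolding convex_L0_def by blast
      then have "0 \<le> (1/2::real) \<and> (1/2::real) \<le> 1 \<longrightarrow> (\<lambda>\<omega>. (1/2) * f \<omega> + (1 - 1/2) * g \<omega>) \<in> A"
        by (rule allE)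
      then show ?thesis by simp
    qed
    have Eeq: "E j (Suc n) = B j \<union> E (Suc j) n"
    proof -
      have "{j..<j + Suc n} = insert j {Suc j..<Suc j + n}" by auto
      then show ?thesis unfolding E_def by auto
    qed
    show ?case
    proof (rule solid[OF hA])
      show "(\<lambda>\<omega>. (2::real) ^ j * indicator (E j (Suc n)) \<omega>) \<in> borel_measurable M"
        using Es by measurable
      fix \<omega> assume "\<omega> \<in> space M"
      show "0 \<le> (2::real) ^ j * indicator (E j (Suc n)) \<omega>" by simp
      show "(2::real) ^ j * indicator (E j (Suc n)) \<omega> \<le> \<bar>1 / 2 * f \<omega> + (1 - 1 / 2) * g \<omega>\<bar>"
        unfolding Eeq f_def g_def by (auto simp: indicator_def)
    qed
  qed
  define F where "F j = (\<Union>k\<in>{j..}. B k)" for j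
  have Fs: "F j \<in> sets M" for j unfolding F_def using Bs by auto
  have EF: "E j n \<subseteq> F j" for j n unfolding E_def F_def by auto
  have Flim: "(\<lambda>n. measure M (E j n)) \<longlonglongrightarrow> measure M (F j)" for j
  proof -
    have "(\<lambda>n. measure M (E j n)) \<longlonglongrightarrow> measure M (\<Union>n. E j n)"
    proof (rule finite_Lim_measure_incseq)
      show "range (E j) \<subseteq> sets M" using Es by auto
      show "incseq (E j)" unfolding incseq_def E_def by (intro allI impI UN_mono) auto
    qed
    moreover have "(\<Union>n. E j n) = F j"
    proof
      show "(\<Union>n. E j n) \<subseteq> F j" using EF by auto
      show "F j \<subseteq> (\<Union>n. E j n)"
      proof
        fix \<omega> assume "\<omega> \<in> F j"
        then obtain k where "k \<ge> j" "\<omega> \<in> B k" unfolding F_def by auto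
        then have "\<omega> \<in> E j (Suc k - j)" unfolding E_def by auto
        then show "\<omega> \<in> (\<Union>n. E j n)" by auto
      qed
    qed
    ultimately show ?thesis by simp
  qed
  define \<delta> where "\<delta> j = \<epsilon> / 4 * (1/2) ^ j" for j :: nat
  have \<delta>pos: "\<delta> j > 0" for j unfolding \<delta>_def using ep by simp
  have "\<exists>n. measure M (F j - E j n) < \<delta> j" for j
  proof -
    have "eventually (\<lambda>n. dist (measure M (E j n)) (measure M (F j)) < \<delta> j) sequentially"
      using Flim[of j] \<delta>pos[of j] by (auto simp: tendsto_iff)
    then obtain n where n: "dist (measure M (E j n)) (measure M (F j)) < \<delta> j"
      by (meson eventually_sequentially order_refl)
    have "measure M (F j - E j n) = measure M (F j) - measure M (E j n)"
      by (rule finite_measure_Diff[OF Fs Es EF])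
    with n have "measure M (F j - E j n) < \<delta> j" by (auto simp: dist_real_def)
    then show ?thesis by blast
  qed
  then obtain N where N: "\<And>j. measure M (F j - E j (N j)) < \<delta> j" by metis
  define D where "D = (\<Inter>j. E j (N j))"
  define G where "G = (\<Inter>j. F j)"
  have Ds: "D \<in> sets M" unfolding D_def using Es by auto
  have Gs: "G \<in> sets M" unfolding G_def using Fs by auto
  have DG: "D \<subseteq> G" unfolding D_def G_def using EF by blast
  have Geps: "\<epsilon> \<le> measure M G"
  proof -
    have "(\<lambda>j. measure M (F j)) \<longlonglongrightarrow> measure M G"
      unfolding G_def
    proof (rule finite_Lim_measure_decseq)
      show "range F \<subseteq> sets M" using Fs by blast
      show "decseq F" unfolding decseq_def F_def by (intro allI impI UN_mono) auto
    qed
    moreover have "\<epsilon> \<le> measure M (F j)" for j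
    proof -
      have "measure M (B j) \<le> measure M (F j)"
        by (rule finite_measure_mono[OF _ Fs]) (auto simp: F_def)
      with XsB[of j] show ?thesis unfolding B_def by simp
    qed
    ultimately show ?thesis by (intro LIMSEQ_le_const) auto
  qed
  have sumd: "(\<lambda>j. \<delta> j) sums (\<epsilon> / 2)"
  proof -
    have "(\<lambda>j. (1/2::real) ^ j) sums (1 / (1 - 1/2))" by (rule geometric_sums) simp
    then have "(\<lambda>j. \<epsilon>/4 * (1/2::real) ^ j) sums (\<epsilon>/4 * (1 / (1 - 1/2)))" by (rule sums_mult)
    then show ?thesis unfolding \<delta>_def by simp
  qed
  have summ: "summable \<delta>" using sumd by (simp add: sums_iff)
  have le: "measure M (F j - E j (N j)) \<le> \<delta> j" for j using N[of j] by (rule less_imp_le)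
  have summ2: "summable (\<lambda>j. measure M (F j - E j (N j)))"
    by (rule summable_comparison_test'[OF summ]) (simp add: le)
  have GD: "measure M (G - D) \<le> \<epsilon> / 2"
  proof -
    have "G - D \<subseteq> (\<Union>j. F j - E j (N j))" unfolding G_def D_def by blast
    moreover have "(\<Union>j. F j - E j (N j)) \<in> sets M" using Fs Es by blast
    ultimately have "measure M (G - D) \<le> measure M (\<Union>j. F j - E j (N j))"
      by (rule finite_measure_mono)
    also have "\<dots> \<le> (\<Sum>j. measure M (F j - E j (N j)))"
    proof (rule finite_measure_subadditive_countably)
      show "range (\<lambda>j. F j - E j (N j)) \<subseteq> sets M" using Fs Es by blast
    qed (rule summ2)
    also have "\<dots> \<le> (\<Sum>j. \<delta> j)"
      by (rule suminf_le[OF le summ2 summ])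
    also have "\<dots> = \<epsilon> / 2" using sumd by (simp add: sums_iff)
    finally show ?thesis .
  qed
  have Dpos: "measure M D > 0"
  proof -
    have "measure M (G - D) = measure M G - measure M D" by (rule finite_measure_Diff[OF Gs Ds DG])
    with GD Geps ep show ?thesis by simp
  qed
  have cA: "(\<lambda>\<omega>. c * indicator D \<omega>) \<in> A" if "c > 0" for c :: real
  proof -
    obtain j :: nat where j: "c < 2 ^ j" using real_arch_pow[of 2 c] by auto
    have DE: "D \<subseteq> E j (N j)" unfolding D_def by auto
    show ?thesis
    proof (rule solid[OF key[of j "N j"]])
      show "(\<lambda>\<omega>. c * indicator D \<omega>) \<in> borel_measurable M" using Ds by measurable
      fix \<omega> assume "\<omega> \<in> space M"
      show "0 \<le> c * indicator D \<omega>" using that by simp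
      show "c * indicator D \<omega> \<le> \<bar>2 ^ j * indicator (E j (N j)) \<omega>\<bar>"
        using DE j by (auto simp: indicator_def)
    qed
  qed
  have IA: "indicator D \<in> A" using cA[of 1] by simp
  have nz: "\<not> (AE \<omega> in M. indicator D \<omega> = (0::real))"
  proof
    assume "AE \<omega> in M. indicator D \<omega> = (0::real)"
    moreover have "{\<omega> \<in> space M. \<not> indicator D \<omega> = (0::real)} = D"
      using sets.sets_into_space[OF Ds] by (auto simp: indicator_def)
    ultimately have "emeasure M D = 0" by (simp add: AE_iff_measurable[OF Ds])
    with Dpos show False by (simp add: emeasure_eq_measure)
  qed
  obtain l where l: "0 < l" "\<And>c. l < c \<Longrightarrow> (\<lambda>\<omega>. c * indicator D \<omega>) \<notin> A"
  proof -
    have rb: "\<forall>X\<in>A. \<not> (AE \<omega> in M. X \<omega> = 0) \<longrightarrow>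
       (\<exists>l::real. 0 < l \<and> (\<forall>c::real. l < c \<longrightarrow> (\<lambda>\<omega>. c * X \<omega>) \<notin> A))"
      using R unfolding radially_bounded_def .
    have "\<exists>l::real. 0 < l \<and> (\<forall>c::real. l < c \<longrightarrow> (\<lambda>\<omega>. c * indicator D \<omega>) \<notin> A)"
      using bspec[OF rb IA] nz by (rule mp)
    then show ?thesis using that by blast
  qed
  show False using l(2)[of "l+1"] cA[of "l+1"] l(1) by simp
qed

theorem theorem3p4:
  fixes M :: "'a measure" and A :: "('a \<Rightarrow> real) set"
  assumes "prob_space M"
    and "A \<subseteq> L0_pos M"
    and "convex_L0 A"
    and "solid_pos M A"
  shows "tight_L0 M A \<longleftrightarrow> radially_bounded M A"
  using tight_radial[OF assms(1,2)] radial_tight[OF assms] by blast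

end
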